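(* For every $a>0$ there is a constant $C$ such that $|v(x)|\le C(1+|x|^{p-a})$ for all $x\notin K$.
   Context: Let $d\ge2$, $\Sigma$ an open connected subset of $\mathbb S^{d-1}$ regular for the Laplace–Beltrami operator $L$, $K=\{t\theta:t>0,\theta\in\Sigma\}$. $\lambda_1>0$ and $m_1>0$ are the principal Dirichlet eigenvalue and eigenfunction ($Lm_1=-\lambda_1m_1$ in $\Sigma$, $m_1=0$ on $\partial\Sigma$), $p=\sqrt{\lambda_1+(d/2-1)^2}-(d/2-1)$, $u(x)=|x|^pm_1(x/|x|)$. Assume $m_1$ extends, as a solution of $Lm_1=-\lambda_1m_1$, to an open connected $\widetilde\Sigma\supset\Sigma$ with ${\rm dist}(\partial\Sigma,\partial\widetilde\Sigma)>0$, so that $u$ (same formula) is harmonic on the cone $\widetilde K$ generated by $\widetilde\Sigma$. For $\eta>0$ let $K^\eta=\{y:|y-x|<\eta|x|\text{ for some }x\in K\}$, with $\eta$ fixed so that $K\subset K^{4\eta}\subset\widetilde K$. For $a>0$ let $G=K^\eta\cap(K\cup\{x\notin K:{\rm dist}(x,\partial K)\le|x|^{1-a}\})$ and $v(x)=u(x)$ for $x\in G$, $v(x)=|x|^{p-a}$ for $x\notin G$. *)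

theory Defs
  imports "HOL-Analysis.Analysis"
begin

definition cone_of :: "'a::euclidean_space set \<Rightarrow> 'a set" where
  "cone_of S = {t *\<^sub>R \<theta> | t \<theta>. t > 0 \<and> \<theta> \<in> S}"

definition C2_on :: "'a::euclidean_space set \<Rightarrow> ('a \<Rightarrow> real) \<Rightarrow> bool" where
  "C2_on S f \<longleftrightarrow> (\<exists>(f' :: 'a \<Rightarrow> 'a \<Rightarrow>\<^sub>L real) (f'' :: 'a \<Rightarrow> 'a \<Rightarrow>\<^sub>L ('a \<Rightarrow>\<^sub>L real)).
      (\<forall>x\<in>S. (f has_derivative blinfun_apply (f' x)) (at x)) \<and>
      (\<forall>x\<in>S. (f' has_derivative blinfun_apply (f'' x)) (at x)) \<and>
      continuous_on S f'')"

definition laplacian :: "('a::euclidean_space \<Rightarrow> real) \<Rightarrow> 'a \<Rightarrow> real" where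
  "laplacian f x = (\<Sum>b\<in>Basis. deriv (\<lambda>s. deriv (\<lambda>t. f (x + t *\<^sub>R b)) s) 0)"

text \<open>Laplace--Beltrami operator on the unit sphere, via the 0-homogeneous extension.\<close>
definition LB :: "('a::euclidean_space \<Rightarrow> real) \<Rightarrow> 'a \<Rightarrow> real" where
  "LB f \<theta> = laplacian (\<lambda>x. f (x /\<^sub>R norm x)) \<theta>"

definition sph_C2 :: "'a::euclidean_space set \<Rightarrow> ('a \<Rightarrow> real) \<Rightarrow> bool" where
  "sph_C2 S f \<longleftrightarrow> C2_on (cone_of S) (\<lambda>x. f (x /\<^sub>R norm x))"

definition sph_boundary :: "'a::euclidean_space set \<Rightarrow> 'a set" where
  "sph_boundary S = closure S - S"

definition dirichlet_eigenpair :: "'a::euclidean_space set \<Rightarrow> real \<Rightarrow> ('a \<Rightarrow> real) \<Rightarrow> bool" where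
  "dirichlet_eigenpair S lam m \<longleftrightarrow>
     sph_C2 S m \<and> continuous_on (closure S) m \<and>
     (\<forall>\<theta>\<in>S. LB m \<theta> = - lam * m \<theta>) \<and>
     (\<forall>\<theta>\<in>sph_boundary S. m \<theta> = 0) \<and> (\<exists>\<theta>\<in>S. m \<theta> \<noteq> 0)"

definition LB_regular :: "'a::euclidean_space set \<Rightarrow> bool" where
  "LB_regular S \<longleftrightarrow> (\<forall>g. continuous_on (sph_boundary S) g \<longrightarrow>
     (\<exists>h. sph_C2 S h \<and> continuous_on (closure S) h \<and> (\<forall>\<theta>\<in>S. LB h \<theta> = 0) \<and>
          (\<forall>\<theta>\<in>sph_boundary S. h \<theta> = g \<theta>)))"

definition cone_nbhd :: "'a::euclidean_space set \<Rightarrow> real \<Rightarrow> 'a set" where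
  "cone_nbhd K eta = {y. \<exists>x\<in>K. dist y x < eta * norm x}"

end

theory Submission
  imports Defs
begin


lemma cone_mem:
  fixes S :: "'a::euclidean_space set"
  assumes "S \<subseteq> sphere 0 1"
  shows "y \<in> cone_of S \<longleftrightarrow> y \<noteq> 0 \<and> y /\<^sub>R norm y \<in> S"
proof
  assume "y \<in> cone_of S"
  then obtain t th where h: "y = t *\<^sub>R th" "t>0" "th \<in> S" unfolding cone_of_def by auto
  moreover have "norm th = 1" using assms h by auto
  ultimately show "y \<noteq> 0 \<and> y /\<^sub>R norm y \<in> S" by auto
next
  assume h: "y \<noteq> 0 \<and> y /\<^sub>R norm y \<in> S"
  then have "y = norm y *\<^sub>R (y /\<^sub>R norm y)" "norm y > 0" by auto
  then show "y \<in> cone_of S" unfolding cone_of_def using h by blast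
qed

lemma nbhd_scale:
  fixes K :: "'a::euclidean_space set"
  assumes K: "\<And>w r. w \<in> K \<Longrightarrow> r > 0 \<Longrightarrow> w /\<^sub>R r \<in> K"
    and x: "x \<in> cone_nbhd K e" and r: "r > 0"
  shows "x /\<^sub>R r \<in> cone_nbhd K e"
proof -
  obtain w where w: "w \<in> K" "dist x w < e * norm w" using x unfolding cone_nbhd_def by auto
  have "dist (x /\<^sub>R r) (w /\<^sub>R r) = dist x w / r"
    using r by (simp add: dist_norm divide_inverse_commute flip: scaleR_diff_right)
  also have "\<dots> < e * norm w / r" using w r by (simp add: divide_strict_right_mono)
  also have "\<dots> = e * norm (w /\<^sub>R r)" using r by (simp add: divide_inverse_commute)
  finally show ?thesis unfolding cone_nbhd_def using K[OF w(1) r] by blast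
qed

theorem lemma4:
  fixes \<Sigma> \<Sigma>t :: "'a::euclidean_space set"
    and m1 :: "'a \<Rightarrow> real" and lam1 eta :: real
    and p :: real and u :: "'a \<Rightarrow> real" and K Kt :: "'a set"
    and G :: "real \<Rightarrow> 'a set" and v :: "real \<Rightarrow> 'a \<Rightarrow> real"
  assumes dim: "DIM('a) \<ge> 2"
    and sub: "\<Sigma> \<subseteq> sphere 0 1"
    and opn: "openin (top_of_set (sphere 0 1)) \<Sigma>"
    and conn: "connected \<Sigma>" and ne: "\<Sigma> \<noteq> {}"
    and reg: "LB_regular \<Sigma>"
    and lam_pos: "lam1 > 0"
    and eig: "dirichlet_eigenpair \<Sigma> lam1 m1"
    and m1_pos: "\<forall>\<theta>\<in>\<Sigma>. m1 \<theta> > 0"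
    and principal: "\<forall>lam m. dirichlet_eigenpair \<Sigma> lam m \<longrightarrow> lam1 \<le> lam"
    and subt: "\<Sigma>t \<subseteq> sphere 0 1"
    and opnt: "openin (top_of_set (sphere 0 1)) \<Sigma>t"
    and connt: "connected \<Sigma>t"
    and ext_sub: "\<Sigma> \<subseteq> \<Sigma>t"
    and ext_dist: "\<exists>\<delta>>0. \<forall>x\<in>sph_boundary \<Sigma>. \<forall>y\<in>sph_boundary \<Sigma>t. \<delta> \<le> dist x y"
    and ext_C2: "sph_C2 \<Sigma>t m1"
    and ext_eq: "\<forall>\<theta>\<in>\<Sigma>t. LB m1 \<theta> = - lam1 * m1 \<theta>"
    and p_def: "p = sqrt (lam1 + (real DIM('a) / 2 - 1)\<^sup>2) - (real DIM('a) / 2 - 1)"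
    and u_def: "u = (\<lambda>x. norm x powr p * m1 (x /\<^sub>R norm x))"
    and K_def: "K = cone_of \<Sigma>"
    and Kt_def: "Kt = cone_of \<Sigma>t"
    and eta_pos: "eta > 0"
    and eta1: "K \<subseteq> cone_nbhd K (4 * eta)"
    and eta2: "cone_nbhd K (4 * eta) \<subseteq> Kt"
    and G_def: "G = (\<lambda>a. cone_nbhd K eta \<inter>
                   (K \<union> {x. x \<notin> K \<and> infdist x (frontier K) \<le> norm x powr (1 - a)}))"
    and v_def: "v = (\<lambda>a x. if x \<in> G a then u x else norm x powr (p - a))"
  shows "\<forall>a>0. \<exists>C. \<forall>x. x \<notin> K \<longrightarrow> \<bar>v a x\<bar> \<le> C * (1 + norm x powr (p - a))"
proof (intro allI impI)
  fix a :: real assume a: "a > 0"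
  define N where "N = (\<lambda>y::'a. y /\<^sub>R norm y)"
  define M where "M = (\<lambda>y. m1 (N y))"
  have Kmem: "\<And>y. y \<in> K \<longleftrightarrow> y \<noteq> 0 \<and> N y \<in> \<Sigma>"
    using cone_mem[OF sub] K_def N_def by simp
  have Ktmem: "\<And>y. y \<in> Kt \<longleftrightarrow> y \<noteq> 0 \<and> N y \<in> \<Sigma>t"
    using cone_mem[OF subt] Kt_def N_def by simp
  have Nscale: "N (y /\<^sub>R r) = N y" if "r > 0" for y r
    using that by (simp add: N_def)
  have Kscale: "\<And>w r. w \<in> K \<Longrightarrow> r > 0 \<Longrightarrow> w /\<^sub>R r \<in> K"
    using Kmem Nscale by auto
  obtain th0 where th0: "th0 \<in> \<Sigma>" using ne by auto
  have nth0: "norm th0 = 1" using sub th0 by auto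
  have th0ne: "th0 \<noteq> 0" using nth0 by auto
  have th0K: "th0 \<in> K" unfolding Kmem N_def using th0 nth0 th0ne by simp
  have eta_le: "eta \<le> 1/4"
  proof (rule ccontr)
    assume "\<not> eta \<le> 1/4"
    then have "(0::'a) \<in> cone_nbhd K (4*eta)" unfolding cone_nbhd_def
      using th0K nth0 by (intro CollectI bexI[of _ th0]) auto
    then have "(0::'a) \<in> Kt" using eta2 by auto
    then show False using Ktmem by auto
  qed
  have Kopen: "open K"
  proof -
    obtain U where U: "open U" "\<Sigma> = sphere 0 1 \<inter> U" using opn by (auto simp: openin_open)
    have Nsph: "\<And>y. y \<noteq> 0 \<Longrightarrow> N y \<in> sphere 0 1" by (simp add: N_def)
    have "K = N -` U \<inter> (- {0})" unfolding set_eq_iff Kmem using U Nsph by blast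
    moreover have "continuous_on (- {0}) N" unfolding N_def by (intro continuous_intros) auto
    ultimately show ?thesis using continuous_on_open_vimage[of "-{0}" N] U(1) by auto
  qed
  have Mfront: "M z = 0" if "z \<in> frontier K" "z \<noteq> 0" for z
  proof -
    have zc: "z \<in> closure K" and znK: "z \<notin> K" using that Kopen by (auto simp: frontier_def interior_open)
    obtain s where s: "\<And>n. s n \<in> K" "s \<longlonglongrightarrow> z" using zc unfolding closure_sequential by blast
    have "isCont N z" unfolding N_def using that(2) by (intro continuous_intros) auto
    then have "(\<lambda>n. N (s n)) \<longlonglongrightarrow> N z" by (rule isCont_tendsto_compose[OF _ s(2)])
    moreover have "\<And>n. N (s n) \<in> \<Sigma>" using s(1) by (simp add: Kmem)
    ultimately have "N z \<in> closure \<Sigma>" unfolding closure_sequential by (intro exI[of _ "\<lambda>n. N (s n)"] conjI allI) auto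
    moreover have "N z \<notin> \<Sigma>" using znK that(2) by (simp add: Kmem)
    ultimately have "N z \<in> sph_boundary \<Sigma>" by (simp add: sph_boundary_def)
    then show ?thesis using eig by (simp add: M_def dirichlet_eigenpair_def)
  qed
  obtain F :: "'a \<Rightarrow> 'a \<Rightarrow>\<^sub>L real" and F2 :: "'a \<Rightarrow> 'a \<Rightarrow>\<^sub>L ('a \<Rightarrow>\<^sub>L real)" where
    F: "\<forall>x\<in>Kt. (M has_derivative blinfun_apply (F x)) (at x)"
    and F2: "\<forall>x\<in>Kt. (F has_derivative blinfun_apply (F2 x)) (at x)"
    using ext_C2 unfolding sph_C2_def C2_on_def M_def N_def Kt_def by blast
  define Cs where "Cs = closure (cone_nbhd K (2*eta)) \<inter> (cball 0 2 - ball 0 (1/2))"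
  have Ccomp: "compact Cs" unfolding Cs_def compact_eq_bounded_closed
    by (intro conjI closed_Int closed_Diff bounded_Int) auto
  have CKt: "Cs \<subseteq> Kt"
  proof
    fix y assume y: "y \<in> Cs"
    then have yc: "y \<in> closure (cone_nbhd K (2*eta))" and yn: "norm y \<ge> 1/2" by (auto simp: Cs_def)
    obtain y' where y': "y' \<in> cone_nbhd K (2*eta)" "dist y' y < eta/4"
      using yc eta_pos closure_approachable[of y] by (metis divide_pos_pos zero_less_numeral)
    then obtain w where w: "w \<in> K" "dist y' w < 2*eta*norm w" unfolding cone_nbhd_def by auto
    have t1: "norm y \<le> norm w + dist y' w + dist y' y"
      using dist_triangle[of y 0 y'] dist_triangle[of y' 0 w] by (simp add: dist_commute)
    have "norm w > 1/8"
    proof (rule ccontr)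
      assume nw: "\<not> norm w > 1/8"
      then have "2*eta*norm w \<le> 2*(1/4)*(1/8)" using eta_le eta_pos
        by (intro mult_mono) auto
      then show False using t1 yn y' w eta_le nw by linarith
    qed
    then have "eta/4 < 2*eta*norm w" using eta_pos by (simp add: field_simps)
    then have "dist y w < 4*eta*norm w"
      using dist_triangle[of y w y'] y' w by (simp add: dist_commute)
    then have "y \<in> cone_nbhd K (4*eta)" unfolding cone_nbhd_def using w by blast
    then show "y \<in> Kt" using eta2 by blast
  qed
  have Fcont: "continuous_on Cs F"
    using CKt F2 by (intro continuous_at_imp_continuous_on) (auto intro: has_derivative_continuous)
  have Mcont: "continuous_on Cs M"
    using CKt F by (intro continuous_at_imp_continuous_on) (auto intro: has_derivative_continuous)
  obtain L where L: "L > 0" "\<And>y. y \<in> Cs \<Longrightarrow> norm (F y) \<le> L"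
    using compact_imp_bounded[OF compact_continuous_image[OF Fcont Ccomp]]
    unfolding bounded_pos by auto
  obtain B where B: "B > 0" "\<And>y. y \<in> Cs \<Longrightarrow> norm (M y) \<le> B"
    using compact_imp_bounded[OF compact_continuous_image[OF Mcont Ccomp]]
    unfolding bounded_pos by auto
  have p_pos: "p > 0"
  proof -
    let ?q = "real DIM('a) / 2 - 1"
    have "sqrt (?q\<^sup>2) < sqrt (lam1 + ?q\<^sup>2)" using lam_pos by (intro real_sqrt_less_mono) simp
    moreover have "sqrt (?q\<^sup>2) = \<bar>?q\<bar>" by (rule real_sqrt_abs)
    moreover have "?q \<le> \<bar>?q\<bar>" by (rule abs_ge_self)
    ultimately show ?thesis using p_def by linarith
  qed
  define \<epsilon> where "\<epsilon> = min (1/2) (eta/2)"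
  have eps: "\<epsilon> > 0" "\<epsilon> \<le> 1/2" "\<epsilon> \<le> eta/2" using eta_pos by (auto simp: \<epsilon>_def)
  define R0 where "R0 = \<epsilon> powr (-1/a)"
  have R0: "R0 > 0" using eps by (simp add: R0_def)
  have R0a: "R0 powr (-a) = \<epsilon>"
    using eps a by (simp add: R0_def powr_powr)
  define CC where "CC = max 1 (max L (R0 powr p * B))"
  have CC: "CC \<ge> 1" "CC \<ge> L" "CC \<ge> R0 powr p * B" by (auto simp: CC_def)
  have KnU: "K \<noteq> UNIV" using Kmem by auto
  have frne: "frontier K \<noteq> {}" using frontier_not_empty[of K] th0K KnU by auto
  show "\<exists>C. \<forall>x. x \<notin> K \<longrightarrow> \<bar>v a x\<bar> \<le> C * (1 + norm x powr (p - a))"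
  proof (intro exI allI impI)
    fix x assume xK: "x \<notin> K"
    have pw0: "norm x powr (p - a) \<ge> 0" by simp
    have CCle: "CC \<le> CC * (1 + norm x powr (p - a))" using CC pw0 by (simp add: algebra_simps)
    show "\<bar>v a x\<bar> \<le> CC * (1 + norm x powr (p - a))"
    proof (cases "x \<in> G a")
      case False
      then have "\<bar>v a x\<bar> = norm x powr (p - a)" using v_def by simp
      also have "\<dots> \<le> CC * (1 + norm x powr (p - a))"
        using CC pw0 mult_right_mono[OF CC(1) pw0] by (simp add: algebra_simps)
      finally show ?thesis .
    next
      case True
      then have vu: "v a x = u x" using v_def by simp
      have xnb: "x \<in> cone_nbhd K eta" and xd: "infdist x (frontier K) \<le> norm x powr (1 - a)"
        using True xK G_def by auto
      show ?thesis
      proof (cases "x = 0")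
        case True
        then show ?thesis using vu u_def CC CCle by simp
      next
        case xne: False
        define r where "r = norm x"
        have r: "r > 0" using xne by (simp add: r_def)
        define x' where "x' = x /\<^sub>R r"
        have nx': "norm x' = 1" using r by (simp add: x'_def r_def)
        have Mx': "M x' = M x" using Nscale[OF r] by (simp add: M_def x'_def)
        have ux: "u x = r powr p * M x" using u_def by (simp add: r_def M_def N_def)
        have x'nb: "x' \<in> cone_nbhd K eta" using nbhd_scale[OF Kscale xnb r] by (simp add: x'_def)
        show ?thesis
        proof (cases "r < R0")
          case True
          have "cone_nbhd K eta \<subseteq> cone_nbhd K (2*eta)"
          proof
            fix y assume "y \<in> cone_nbhd K eta"
            then obtain w where w: "w \<in> K" "dist y w < eta * norm w" unfolding cone_nbhd_def by auto
            have "eta * norm w \<le> 2 * eta * norm w" using eta_pos by simp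
            then show "y \<in> cone_nbhd K (2*eta)" unfolding cone_nbhd_def using w by force
          qed
          then have "x' \<in> Cs" using x'nb nx' closure_subset by (auto simp: Cs_def)
          then have "\<bar>M x\<bar> \<le> B" using B(2)[of x'] Mx' by simp
          then have "\<bar>u x\<bar> \<le> r powr p * B" using ux by (simp add: abs_mult mult_left_mono)
          also have "\<dots> \<le> R0 powr p * B"
            using True r p_pos B by (intro mult_right_mono powr_mono2) auto
          finally show ?thesis using vu CC CCle by linarith
        next
          case False
          then have rR: "r \<ge> R0" by simp
          obtain z where z: "z \<in> frontier K" "infdist x (frontier K) = dist x z"
            using infdist_attains_inf[OF frontier_closed frne] by blast
          have ra: "r powr (-a) \<le> \<epsilon>"
            using powr_mono2'[of "-a" R0 r] a R0 rR R0a by simp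
          have r1a: "r powr (1 - a) = r * r powr (-a)"
            using r powr_add[of r 1 "-a"] by simp
          have dxz: "dist x z \<le> r * r powr (-a)" using xd z r1a by (simp add: r_def)
          have dxz2: "dist x z \<le> r * \<epsilon>" using dxz ra r by (meson mult_left_mono order.trans less_imp_le)
          have "norm z \<ge> r - dist x z" using norm_triangle_ineq2[of x z] by (simp add: r_def dist_norm)
          moreover have "r * \<epsilon> \<le> r * (1/2)" using eps r by (intro mult_left_mono) auto
          ultimately have "norm z > 0" using dxz2 r by linarith
          then have zne: "z \<noteq> 0" by auto
          define z' where "z' = z /\<^sub>R r"
          have Mz': "M z' = 0" using Nscale[OF r] Mfront[OF z(1) zne] by (simp add: M_def z'_def)
          have dd: "norm (x' - z') = dist x z / r"
            using r by (simp add: x'_def z'_def dist_norm divide_inverse_commute flip: scaleR_diff_right)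
          have dd2: "norm (x' - z') \<le> r powr (-a)"
            using dd dxz r by (simp add: divide_le_eq mult.commute)
          have seg: "closed_segment x' z' \<subseteq> Cs"
          proof
            fix y assume y: "y \<in> closed_segment x' z'"
            have yx: "norm (y - x') \<le> \<epsilon>" using segment_bound(1)[OF y] dd2 ra
              by (simp add: norm_minus_commute)
            obtain w where w: "w \<in> K" "dist x' w < eta * norm w" using x'nb unfolding cone_nbhd_def by auto
            have "norm x' \<le> norm w + dist x' w"
              using norm_triangle_ineq[of "x' - w" w] by (simp add: dist_norm)
            then have "1 < (1 + eta) * norm w" using w nx' by (simp add: algebra_simps)
            then have wn: "norm w \<ge> 1/2"
            proof -
              assume h: "1 < (1 + eta) * norm w"
              show ?thesis
              proof (rule ccontr)
                assume "\<not> norm w \<ge> 1/2"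
                then have "(1 + eta) * norm w \<le> (5/4) * (1/2)" using eta_le eta_pos
                  by (intro mult_mono) auto
                then show False using h by linarith
              qed
            qed
            have h2: "eta/2 \<le> eta * norm w" using wn eta_pos by (simp add: field_simps)
            have "dist y w \<le> norm (y - x') + dist x' w" using dist_triangle[of y w x'] by (simp add: dist_norm)
            then have "dist y w < 2 * eta * norm w"
              using h2 w(2) yx eps by linarith
            then have "y \<in> cone_nbhd K (2*eta)" unfolding cone_nbhd_def using w by blast
            moreover have "norm y \<le> 2" "norm y \<ge> 1/2"
              using norm_triangle_ineq[of "y - x'" x'] norm_triangle_ineq2[of x' "x' - y"] yx nx' eps
              by (auto simp: norm_minus_commute)
            ultimately show "y \<in> Cs" using closure_subset by (auto simp: Cs_def)
          qed
          have "norm (M x' - M z') \<le> L * norm (x' - z')"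
          proof (rule differentiable_bound[where f' = "\<lambda>y. blinfun_apply (F y)"])
            show "convex (closed_segment x' z')" by simp
            show "\<And>y. y \<in> closed_segment x' z' \<Longrightarrow> (M has_derivative blinfun_apply (F y)) (at y within closed_segment x' z')"
              using seg CKt F by (auto intro: has_derivative_at_withinI)
            show "\<And>y. y \<in> closed_segment x' z' \<Longrightarrow> onorm (blinfun_apply (F y)) \<le> L"
              using seg L by (auto simp flip: norm_blinfun.rep_eq)
          qed auto
          then have "\<bar>M x\<bar> \<le> L * r powr (-a)"
            using Mx' Mz' dd2 L(1) by (smt (verit) mult_left_mono real_norm_def)
          then have "\<bar>u x\<bar> \<le> r powr p * (L * r powr (-a))"
            using ux by (simp add: abs_mult mult_left_mono)
          also have "\<dots> = L * r powr (p - a)"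
            using r by (simp add: powr_diff powr_minus divide_inverse)
          also have "\<dots> \<le> CC * (1 + norm x powr (p - a))"
            using CC pw0 r_def by (smt (verit) mult_right_mono distrib_left mult_nonneg_nonneg)
          finally show ?thesis using vu by simp
        qed
      qed
    qed
  qed
qed

end
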